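(* Let $k\ge 1$ and let $n,n_1,\dots,n_k\ge 1$ be integers; set $m=n+\sum_{j=1}^k n_j$. Define $\varphi(a)=(1-a)^k-\frac{a(m-n)+n}{m}$ for $0\le a\le 1$, and let $a_0\in(0,1)$ be the number such that $\varphi(a_0)=0$ and $\varphi(a)>0$ for all $a\in[0,a_0)$. Let $0<a\le a_0$, and let $z_1,\dots,z_k\in\mathbb{C}$ be pairwise distinct with $|z_j|\le 1$ and $z_j\neq a$ for $j=1,\dots,k$. Let $$p(z)=(z-a)^n\prod_{j=1}^{k}(z-z_j)^{n_j},\quad z\in\mathbb{C}.$$ Then there exists $\zeta\neq a$ such that $p'(\zeta)=0$ and $|a-\zeta|\le 1$.
   Context: The number $a_0$ exists since $\varphi(0)=(m-n)/m>0$ and $\varphi(1)=-1<0$; it is the smallest zero of $\varphi$ in $(0,1)$. *)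

theory Defs
  imports "HOL-Analysis.Analysis"
begin

end

theory Submission
  imports Defs "HOL-Computational_Algebra.Fundamental_Theorem_Algebra"
begin

lemma linprod_degree:
  fixes zs :: "nat \<Rightarrow> complex"
  assumes "finite A"
  shows "degree (\<Prod>i\<in>A. [:- zs i, 1:]) = card A \<and> lead_coeff (\<Prod>i\<in>A. [:- zs i, 1:]) = 1"
proof -
  have "degree (\<Prod>i\<in>A. [:- zs i, 1:]) = (\<Sum>i\<in>A. degree [:- zs i, 1:])"
    by (rule degree_prod_eq_sum_degree) auto
  moreover have "lead_coeff (\<Prod>i\<in>A. [:- zs i, 1:]) = (\<Prod>i\<in>A. lead_coeff [:- zs i, 1:])"
    by (rule lead_coeff_prod)
  ultimately show ?thesis by simp
qed

theorem theorem2: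
  fixes k n :: nat and ns :: "nat \<Rightarrow> nat" and zs :: "nat \<Rightarrow> complex"
    and a a0 :: real and m :: nat and \<phi> :: "real \<Rightarrow> real" and p :: "complex \<Rightarrow> complex"
  assumes "k \<ge> 1" and "n \<ge> 1" and "\<forall>j\<in>{1..k}. ns j \<ge> 1"
    and m_def: "m = n + (\<Sum>j=1..k. ns j)"
    and phi_def: "\<phi> = (\<lambda>b. (1 - b) ^ k - (b * (real m - real n) + real n) / real m)"
    and "0 < a0" and "a0 < 1" and "\<phi> a0 = 0" and "\<forall>b\<in>{0..<a0}. \<phi> b > 0"
    and "0 < a" and "a \<le> a0"
    and "inj_on zs {1..k}"
    and "\<forall>j\<in>{1..k}. cmod (zs j) \<le> 1 \<and> zs j \<noteq> complex_of_real a"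
    and p_def: "p = (\<lambda>z. (z - complex_of_real a) ^ n * (\<Prod>j=1..k. (z - zs j) ^ ns j))"
  shows "\<exists>\<zeta>. \<zeta> \<noteq> complex_of_real a \<and> deriv p \<zeta> = 0 \<and> cmod (complex_of_real a - \<zeta>) \<le> 1"
proof (rule ccontr)
  assume neg: "\<not> ?thesis"
  define K where "K = {1..k}"
  have finK: "finite K" unfolding K_def by simp
  define ca where "ca = complex_of_real a"
  define L where "L = (\<lambda>A. \<Prod>i\<in>A. [:- zs i, 1:])"
  define Q where "Q = smult (of_nat n) (L K) + (\<Sum>j\<in>K. [:- ca, 1:] * smult (of_nat (ns j)) (L (K - {j})))"
  define S where "S = (\<lambda>z. of_nat n / (z - ca) + (\<Sum>j\<in>K. of_nat (ns j) / (z - zs j)))"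
  have F1: "poly Q z = of_nat n * (\<Prod>i\<in>K. z - zs i) + (z - ca) * (\<Sum>j\<in>K. of_nat (ns j) * (\<Prod>i\<in>K-{j}. z - zs i))" for z
    unfolding Q_def L_def by (auto simp: poly_prod poly_sum sum_distrib_left algebra_simps intro!: sum.cong)
  have ns1: "ns j \<ge> 1" if "j \<in> K" for j using assms(3) that K_def by auto
  have zs1: "cmod (zs j) \<le> 1" "zs j \<noteq> ca" if "j \<in> K" for j using assms(13) that K_def ca_def by auto
  have inj: "inj_on zs K" using assms(12) K_def by simp
  have F2: "poly Q z = (z - ca) * (\<Prod>i\<in>K. z - zs i) * S z" if z1: "z \<noteq> ca" and z2: "\<forall>j\<in>K. z \<noteq> zs j" for z
  proof -
    let ?P = "\<Prod>i\<in>K. z - zs i"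
    have d: "(\<Prod>i\<in>K-{j}. z - zs i) = ?P / (z - zs j)" if "j \<in> K" for j
      using that z2 finK by (simp add: prod_diff1)
    have "poly Q z = of_nat n * ?P + (z - ca) * (\<Sum>j\<in>K. of_nat (ns j) * (?P / (z - zs j)))"
      unfolding F1 using d by (simp cong: sum.cong)
    also have "\<dots> = (z - ca) * ?P * (of_nat n / (z - ca)) + (z - ca) * (\<Sum>j\<in>K. ?P * (of_nat (ns j) / (z - zs j)))"
      using z1 by (simp add: mult_ac)
    also have "\<dots> = (z - ca) * ?P * S z"
      unfolding S_def distrib_left by (simp add: sum_distrib_left mult.assoc)
    finally show ?thesis .
  qed
  have F3: "(p has_field_derivative p z * S z) (at z)" if z1: "z \<noteq> ca" and z2: "\<forall>j\<in>K. z \<noteq> zs j" for z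
  proof -
    have pe: "p = (\<lambda>u. (u - ca) ^ n * (\<Prod>j\<in>K. (\<lambda>j u. (u - zs j) ^ ns j) j u))"
      unfolding p_def K_def ca_def by simp
    have D1: "((\<lambda>u. \<Prod>j\<in>K. (\<lambda>j u. (u - zs j) ^ ns j) j u) has_field_derivative
       ((\<Prod>j\<in>K. (z - zs j) ^ ns j) * (\<Sum>j\<in>K. (of_nat (ns j) * (z - zs j) ^ (ns j - 1)) / (z - zs j) ^ ns j))) (at z)"
      using z2 by (intro has_field_derivative_prod'[where f = "\<lambda>j u. (u - zs j) ^ ns j", simplified])
        (auto intro!: derivative_eq_intros)
    have D2: "((\<lambda>u. (u - ca) ^ n) has_field_derivative of_nat n * (z - ca) ^ (n - 1)) (at z)"
      by (auto intro!: derivative_eq_intros)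
    have "(p has_field_derivative (of_nat n * (z - ca) ^ (n - 1)) * (\<Prod>j\<in>K. (z - zs j) ^ ns j) +
        ((\<Prod>j\<in>K. (z - zs j) ^ ns j) * (\<Sum>j\<in>K. (of_nat (ns j) * (z - zs j) ^ (ns j - 1)) / (z - zs j) ^ ns j)) * (z - ca) ^ n) (at z)"
      using DERIV_mult[OF D2 D1] unfolding pe by simp
    moreover have "(of_nat n * (z - ca) ^ (n - 1)) * (\<Prod>j\<in>K. (z - zs j) ^ ns j) +
        ((\<Prod>j\<in>K. (z - zs j) ^ ns j) * (\<Sum>j\<in>K. (of_nat (ns j) * (z - zs j) ^ (ns j - 1)) / (z - zs j) ^ ns j)) * (z - ca) ^ n
        = p z * S z"
    proof -
      have e1: "(z - ca) ^ (n - 1) = (z - ca) ^ n / (z - ca)"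
        using z1 assms(2) by (simp add: power_diff)
      have e2: "(of_nat (ns j) * (z - zs j) ^ (ns j - 1)) / (z - zs j) ^ ns j = of_nat (ns j) / (z - zs j)" if "j \<in> K" for j
        using z2 ns1[OF that] that by (simp add: power_diff field_simps)
      show ?thesis unfolding S_def pe e1 using e2 by (simp add: algebra_simps sum_distrib_left cong: sum.cong)
    qed
    ultimately show ?thesis by simp
  qed
  have F4: "poly Q (zs j) \<noteq> 0" if jK: "j \<in> K" for j
  proof -
    have z0: "(\<Prod>i\<in>K. zs j - zs i) = 0" using jK finK by (auto simp: prod_zero_iff)
    have s0: "(\<Sum>l\<in>K. of_nat (ns l) * (\<Prod>i\<in>K-{l}. zs j - zs i)) = of_nat (ns j) * (\<Prod>i\<in>K-{j}. zs j - zs i)"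
    proof -
      have "(\<Sum>l\<in>K-{j}. of_nat (ns l) * (\<Prod>i\<in>K-{l}. zs j - zs i)) = (0::complex)"
        using jK finK by (intro sum.neutral) (auto simp: prod_zero_iff)
      then show ?thesis using jK finK by (simp add: sum.remove)
    qed
    have "(\<Prod>i\<in>K-{j}. zs j - zs i) \<noteq> 0"
      using inj jK finK by (auto simp: prod_zero_iff inj_on_def)
    moreover have "zs j - ca \<noteq> 0" using zs1[OF jK] by simp
    moreover have "of_nat (ns j) \<noteq> (0::complex)" using ns1[OF jK] by simp
    ultimately show ?thesis unfolding F1 z0 s0 by simp
  qed
  have F5: "poly Q ca \<noteq> 0"
    unfolding F1 using finK zs1 assms(2) by (auto simp: prod_zero_iff)
  have cardK: "card K = k" unfolding K_def by simp
  have LK: "degree (L K) = k" "lead_coeff (L K) = 1"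
    using linprod_degree[OF finK, of zs] cardK unfolding L_def by auto
  have hj: "degree ([:- ca, 1:] * smult (of_nat (ns j)) (L (K - {j}))) = k \<and>
      lead_coeff ([:- ca, 1:] * smult (of_nat (ns j)) (L (K - {j}))) = of_nat (ns j)" if jK: "j \<in> K" for j
  proof -
    have c: "card (K - {j}) = k - 1" using jK finK cardK by simp
    have d: "degree (L (K - {j})) = k - 1" "lead_coeff (L (K - {j})) = 1"
      using linprod_degree[of "K - {j}" zs] finK c unfolding L_def by auto
    have nz: "of_nat (ns j) \<noteq> (0::complex)" using ns1[OF jK] by simp
    have nz2: "smult (of_nat (ns j)) (L (K - {j})) \<noteq> 0" using nz d by auto
    have D0: "degree ([:- ca, 1:] * smult (of_nat (ns j)) (L (K - {j}))) = 1 + (k - 1)"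
      using nz2 d nz by (subst degree_mult_eq) auto
    have l1: "lead_coeff ([:- ca, 1:] * smult (of_nat (ns j)) (L (K - {j}))) = lead_coeff [:- ca, 1:] * lead_coeff (smult (of_nat (ns j)) (L (K - {j})))"
      by (rule lead_coeff_mult)
    have l2: "lead_coeff [:- ca, 1:] = 1" by simp
    have l3: "lead_coeff (smult (of_nat (ns j)) (L (K - {j}))) = of_nat (ns j)"
      using d by (simp add: lead_coeff_smult)
    have D: "degree ([:- ca, 1:] * smult (of_nat (ns j)) (L (K - {j}))) = k" using D0 assms(1) by linarith
    have LC: "lead_coeff ([:- ca, 1:] * smult (of_nat (ns j)) (L (K - {j}))) = of_nat (ns j)"
      unfolding l1 l2 l3 by simp
    show ?thesis using D LC by blast
  qed
  have degQ_le: "degree Q \<le> k"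
    unfolding Q_def
    by (intro degree_add_le degree_sum_le finK) (use LK hj in \<open>auto intro: order.trans[OF degree_smult_le]\<close>)
  have "coeff Q k = of_nat n + (\<Sum>j\<in>K. of_nat (ns j))"
  proof -
    have hc: "coeff ([:- ca, 1:] * smult (of_nat (ns j)) (L (K - {j}))) k = of_nat (ns j)" if "j \<in> K" for j
      using hj[OF that] by metis
    have "coeff Q k = coeff (smult (of_nat n) (L K)) k + (\<Sum>j\<in>K. coeff ([:- ca, 1:] * smult (of_nat (ns j)) (L (K - {j}))) k)"
      unfolding Q_def by (simp only: coeff_add coeff_sum)
    also have "\<dots> = of_nat n + (\<Sum>j\<in>K. of_nat (ns j))"
    proof -
      have "(\<Sum>j\<in>K. coeff ([:- ca, 1:] * smult (of_nat (ns j)) (L (K - {j}))) k) = (\<Sum>j\<in>K. of_nat (ns j))"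
        by (rule sum.cong[OF refl hc])
      moreover have "coeff (smult (of_nat n) (L K)) k = of_nat n"
        using LK by (metis coeff_smult mult.right_neutral)
      ultimately show ?thesis by simp
    qed
    finally show ?thesis .
  qed
  also have "\<dots> = of_nat m" unfolding m_def K_def by simp
  finally have cQ: "coeff Q k = of_nat m" .
  have m0: "m > 0" using m_def assms(2) by simp
  have degQ: "degree Q = k" using degQ_le cQ m0 by (metis le_antisym le_degree of_nat_eq_0_iff neq0_conv)
  have lQ: "lead_coeff Q = of_nat m" using degQ cQ by simp
  obtain root where rt: "smult (lead_coeff Q) (\<Prod>i<degree Q. [:-root i, 1:]) = Q"
    using complex_poly_decompose' by blast
  have pQ: "poly Q z = of_nat m * (\<Prod>i<k. z - root i)" for z
    using arg_cong[OF rt, of "\<lambda>q. poly q z"] lQ degQ by (simp add: poly_prod)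
  have big: "cmod (root i) > 1 - a" if ik: "i < k" for i
  proof -
    have r0: "poly Q (root i) = 0" unfolding pQ using ik by (auto simp: prod_zero_iff)
    have n1: "root i \<noteq> ca" using r0 F5 by auto
    have n2: "\<forall>j\<in>K. root i \<noteq> zs j" using r0 F4 by auto
    have "(root i - ca) * (\<Prod>j\<in>K. root i - zs j) \<noteq> 0" using n1 n2 finK by (auto simp: prod_zero_iff)
    then have S0: "S (root i) = 0" using F2[OF n1 n2] r0 by simp
    have "deriv p (root i) = 0" using DERIV_imp_deriv[OF F3[OF n1 n2]] S0 by simp
    then have "cmod (ca - root i) > 1" using neg n1 unfolding ca_def by auto
    moreover have "cmod (ca - root i) \<le> cmod ca + cmod (root i)" by (rule norm_triangle_ineq4)
    moreover have "cmod ca = a" unfolding ca_def using assms(10) by simp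
    ultimately show ?thesis by linarith
  qed
  have a1: "a < 1" using assms(7,11) by simp
  have "(\<Prod>i<k. (1 - a)) < (\<Prod>i<k. cmod (root i))"
  proof (rule prod_mono_strict[of 0])
    show "0 \<in> {..<k}" using assms(1) by simp
    show "1 - a < cmod (root 0)" using big assms(1) by simp
    show "finite {..<k}" by simp
    show "0 \<le> 1 - a \<and> 1 - a \<le> cmod (root i)" if "i \<in> {..<k}" for i
      using big[of i] that a1 by simp
    show "0 < cmod (root i)" if "i \<in> {..<k}" for i
    proof -
      have "1 - a < cmod (root i)" using big that by simp
      then show ?thesis using a1 by linarith
    qed
  qed
  then have lo: "real m * (1 - a) ^ k < cmod (poly Q 0)"
  proof -
    have rnz: "\<forall>i<k. root i \<noteq> 0"
    proof (intro allI impI)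
      fix i assume "i < k"
      have "1 - a < cmod (root i)" using big \<open>i < k\<close> by simp
      then have "0 < cmod (root i)" using a1 by linarith
      then show "root i \<noteq> 0" by auto
    qed
    show ?thesis unfolding pQ using m0 rnz \<open>(\<Prod>i<k. (1 - a)) < (\<Prod>i<k. cmod (root i))\<close>
      by (simp add: norm_mult prod_norm[symmetric])
  qed
  have hi: "cmod (poly Q 0) \<le> real n + a * (\<Sum>j\<in>K. real (ns j))"
  proof -
    have p1: "cmod (\<Prod>i\<in>A. 0 - zs i) \<le> 1" if "A \<subseteq> K" for A
      unfolding prod_norm[symmetric] using zs1 that by (intro prod_le_1) auto
    have "cmod (poly Q 0) \<le> cmod (of_nat n * (\<Prod>i\<in>K. 0 - zs i)) + cmod ((0 - ca) * (\<Sum>j\<in>K. of_nat (ns j) * (\<Prod>i\<in>K-{j}. 0 - zs i)))"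
      unfolding F1 by (rule norm_triangle_ineq)
    also have "\<dots> \<le> real n + a * (\<Sum>j\<in>K. real (ns j))"
    proof (rule add_mono)
      show "cmod (of_nat n * (\<Prod>i\<in>K. 0 - zs i)) \<le> real n"
        using p1[of K] by (simp add: norm_mult mult_left_le)
      have "cmod (\<Sum>j\<in>K. of_nat (ns j) * (\<Prod>i\<in>K-{j}. 0 - zs i)) \<le> (\<Sum>j\<in>K. cmod (of_nat (ns j) * (\<Prod>i\<in>K-{j}. 0 - zs i)))"
        by (rule norm_sum)
      also have "\<dots> \<le> (\<Sum>j\<in>K. real (ns j))"
        using p1 by (intro sum_mono) (auto simp: norm_mult mult_left_le)
      finally show "cmod ((0 - ca) * (\<Sum>j\<in>K. of_nat (ns j) * (\<Prod>i\<in>K-{j}. 0 - zs i))) \<le> a * (\<Sum>j\<in>K. real (ns j))"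
        unfolding ca_def using assms(10) by (simp add: norm_mult mult_left_mono)
    qed
    finally show ?thesis .
  qed
  have phi: "\<phi> a \<ge> 0"
    using assms(8,9,10,11) by (cases "a < a0") (auto simp: less_imp_le)
  have ms: "real m - real n = (\<Sum>j\<in>K. real (ns j))" unfolding m_def K_def by simp
  have "(a * (real m - real n) + real n) / real m \<le> (1 - a) ^ k" using phi unfolding phi_def by simp
  then have "a * (real m - real n) + real n \<le> real m * (1 - a) ^ k" using m0 by (simp add: field_simps)
  moreover have "a * (real m - real n) = a * (\<Sum>j\<in>K. real (ns j))" using ms by simp
  ultimately show False using lo hi by linarith
qed

end
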